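(* In the Schwarzschild spacetime with line element $$ds^2=-\left(1-\frac{2m}{r}\right)dt^2+\left(1-\frac{2m}{r}\right)^{-1}dr^2+r^2\left(d\theta^2+\sin^2\theta\, d\varphi^2\right)$$ ($m>0$, $r>2m$, $0<\theta<\pi$), let $p=(t_0,r_0,\theta_0,\varphi_0)$ be an event of a stationary observer with 4-velocity $u=U_p$, where $U=\left(1-\frac{2m}{r}\right)^{-1/2}\frac{\partial}{\partial t}$. Let a test particle have 4-velocity $u'$ at the event $q=(t_0,r_1,\theta_1,\varphi_1)$, and let $u'^t$ denote the $t$-component of $u'$. Let $v_{\mathrm{kin}}$ be the kinematic relative velocity of $u'$ with respect to $u$ (defined with respect to any spacelike geodesic segment $\psi$ from $p$ to $q$ whose tangent at $p$ is orthogonal to $u$), and let $v$ be the usual relative velocity of $u'$ with respect to $U_q$. Then $$\|v_{\mathrm{kin}}\|^2=\|v\|^2=1-\frac{r_1}{(r_1-2m)\,(u'^t)^2}.$$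
   Context: Signature $(-,+,+,+)$, $c=1$; for spacelike $x$, $\|x\|=g(x,x)^{1/2}$. An observer at an event is a future-pointing unit timelike vector. Given an observer $u$ at $p$, a test particle with 4-velocity $u'$ at $q$, and a spacelike geodesic segment $\psi$ from $p$ to $q$ orthogonal to $u$ at $p$, let $\tau_{qp}$ denote parallel transport from $q$ to $p$ along $\psi$. The kinematic relative velocity of $u'$ with respect to $u$ is $$v_{\mathrm{kin}}=\frac{1}{-g(\tau_{qp}u',u)}\tau_{qp}u'-u .$$ When $u,u'$ lie in the same tangent space, the usual relative velocity of $u'$ with respect to $u$ is $v=\frac{1}{-g(u',u)}u'-u$. Stationary observers are those with constant $r,\theta,\varphi$; their 4-velocity field is $U$. *)

theory Defs
  imports "HOL-Analysis.Analysis"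
begin

text \<open>Schwarzschild spacetime in coordinates x = (t, r, theta, phi),
  stored as x$0, x$1, x$2, x$3 of a vector in real^4.  Signature (-,+,+,+).\<close>

definition sch_dom :: "real \<Rightarrow> real^4 \<Rightarrow> bool" where
  "sch_dom m x \<longleftrightarrow> 2 * m < x$1 \<and> 0 < x$2 \<and> x$2 < pi"

definition sch_f :: "real \<Rightarrow> real \<Rightarrow> real" where
  "sch_f m r = 1 - 2 * m / r"

definition sch_g :: "real \<Rightarrow> real^4 \<Rightarrow> real^4 \<Rightarrow> real^4 \<Rightarrow> real" where
  "sch_g m x a b =
     - sch_f m (x$1) * a$0 * b$0
     + inverse (sch_f m (x$1)) * a$1 * b$1
     + (x$1)^2 * a$2 * b$2
     + (x$1)^2 * (sin (x$2))^2 * a$3 * b$3"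

definition sch_gc :: "real \<Rightarrow> real^4 \<Rightarrow> 4 \<Rightarrow> 4 \<Rightarrow> real" where
  "sch_gc m x i j = sch_g m x (axis i 1) (axis j 1)"

definition sch_ginv :: "real \<Rightarrow> real^4 \<Rightarrow> 4 \<Rightarrow> 4 \<Rightarrow> real" where
  "sch_ginv m x k l = matrix_inv (\<chi> i j. sch_gc m x i j) $ k $ l"

definition sch_dg :: "real \<Rightarrow> real^4 \<Rightarrow> 4 \<Rightarrow> 4 \<Rightarrow> 4 \<Rightarrow> real" where
  "sch_dg m x l i j = deriv (\<lambda>s. sch_gc m (x + s *\<^sub>R axis l 1) i j) 0"

definition sch_Gamma :: "real \<Rightarrow> real^4 \<Rightarrow> 4 \<Rightarrow> 4 \<Rightarrow> 4 \<Rightarrow> real" where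
  "sch_Gamma m x k i j =
     (1/2) * (\<Sum>l\<in>UNIV. sch_ginv m x k l *
        (sch_dg m x i l j + sch_dg m x j l i - sch_dg m x l i j))"

definition sch_christ :: "real \<Rightarrow> real^4 \<Rightarrow> real^4 \<Rightarrow> real^4 \<Rightarrow> real^4" where
  "sch_christ m x a b = (\<chi> k. \<Sum>i\<in>UNIV. \<Sum>j\<in>UNIV. sch_Gamma m x k i j * a$i * b$j)"

definition sch_geodesic :: "real \<Rightarrow> (real \<Rightarrow> real^4) \<Rightarrow> real \<Rightarrow> real \<Rightarrow> bool" where
  "sch_geodesic m \<psi> a b \<longleftrightarrow> a < b \<and>
     (\<forall>s\<in>{a..b}. sch_dom m (\<psi> s) \<and> \<psi> differentiable (at s within {a..b}) \<and>
        ((\<lambda>\<sigma>. vector_derivative \<psi> (at \<sigma> within {a..b})) has_vector_derivative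
           (- sch_christ m (\<psi> s) (vector_derivative \<psi> (at s within {a..b}))
                                 (vector_derivative \<psi> (at s within {a..b}))))
          (at s within {a..b}))"

definition sch_parallel :: "real \<Rightarrow> (real \<Rightarrow> real^4) \<Rightarrow> (real \<Rightarrow> real^4) \<Rightarrow> real \<Rightarrow> real \<Rightarrow> bool" where
  "sch_parallel m \<psi> V a b \<longleftrightarrow>
     (\<forall>s\<in>{a..b}. (V has_vector_derivative
           (- sch_christ m (\<psi> s) (vector_derivative \<psi> (at s within {a..b})) (V s)))
          (at s within {a..b}))"

definition sch_U :: "real \<Rightarrow> real^4 \<Rightarrow> real^4" where
  "sch_U m x = (1 / sqrt (sch_f m (x$1))) *\<^sub>R axis 0 1"

definition sch_4velocity :: "real \<Rightarrow> real^4 \<Rightarrow> real^4 \<Rightarrow> bool" where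
  "sch_4velocity m x w \<longleftrightarrow> sch_g m x w w = -1 \<and> sch_g m x w (sch_U m x) < 0"

definition rel_vel :: "real \<Rightarrow> real^4 \<Rightarrow> real^4 \<Rightarrow> real^4 \<Rightarrow> real^4" where
  "rel_vel m x w' w = (1 / (- sch_g m x w' w)) *\<^sub>R w' - w"

definition sch_norm :: "real \<Rightarrow> real^4 \<Rightarrow> real^4 \<Rightarrow> real" where
  "sch_norm m x a = sqrt (sch_g m x a a)"

end

theory Submission
  imports Defs
begin

lemma UNIV4: "(UNIV::4 set) = {0,1,2,3}"
proof -
  have "x = 0 \<or> x = 1 \<or> x = 2 \<or> x = (3::4)" for x
    using exhaust_4[of x] by auto
  then show ?thesis by auto
qed
lemma sum4: "sum f (UNIV::4 set) = f 0 + f 1 + f 2 + f 3"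
  unfolding UNIV4 by (simp add: ac_simps)
lemma cases4: "(x::4) = 0 \<or> x = 1 \<or> x = 2 \<or> x = 3"
  using UNIV4 by auto

definition gd :: "real \<Rightarrow> real^4 \<Rightarrow> 4 \<Rightarrow> real" where
  "gd m x i = (if i = 0 then - sch_f m (x$1) else if i = 1 then inverse (sch_f m (x$1))
     else if i = 2 then (x$1)^2 else (x$1)^2 * (sin (x$2))^2)"

lemma gc_eq: "sch_gc m x i j = (if i = j then gd m x i else 0)"
  using cases4[of i] cases4[of j]
  by (auto simp: sch_gc_def sch_g_def gd_def axis_def)

lemma dom_facts:
  assumes "0 < m" "sch_dom m x"
  shows "0 < x$1" "0 < sch_f m (x$1)" "0 < sin (x$2)"
  using assms by (auto simp: sch_dom_def sch_f_def field_simps intro: sin_gt_zero)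

lemma gd_nz: assumes "0 < m" "sch_dom m x" shows "gd m x i \<noteq> 0"
  using dom_facts[OF assms] by (auto simp: gd_def)

lemma matrix_inv_eq:
  fixes A B :: "real^'n^'n"
  assumes "A ** B = mat 1" "B ** A = mat 1"
  shows "matrix_inv A = B"
proof -
  have ex: "\<exists>C. A ** C = mat 1 \<and> C ** A = mat 1" using assms by blast
  define C where "C = matrix_inv A"
  have C: "A ** C = mat 1 \<and> C ** A = mat 1"
    unfolding C_def matrix_inv_def by (rule someI_ex[OF ex])
  have "C = C ** (A ** B)" using assms by (simp add: matrix_mul_rid)
  also have "\<dots> = (C ** A) ** B" by (simp add: matrix_mul_assoc)
  also have "\<dots> = B" using C by (simp add: matrix_mul_lid)
  finally show ?thesis unfolding C_def .
qed


lemma ginv_eq: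
  assumes "0 < m" "sch_dom m x"
  shows "sch_ginv m x k l = (if k = l then inverse (gd m x k) else 0)"
proof -
  define B :: "real^4^4" where "B = (\<chi> i j. if i = j then inverse (gd m x i) else 0)"
  have nz: "\<And>i. gd m x i \<noteq> 0" using gd_nz[OF assms] .
  have e1: "(\<Sum>k\<in>UNIV. (if i = k then gd m x i else 0) * (if k = j then inverse (gd m x k) else 0))
      = (if i = j then 1 else (0::real))" for i j
    using nz[of i] by (simp add: sum4) (insert cases4[of i] cases4[of j], auto)
  have e2: "(\<Sum>k\<in>UNIV. (if i = k then inverse (gd m x i) else 0) * (if k = j then gd m x k else 0))
      = (if i = j then 1 else (0::real))" for i j
    using nz[of i] by (simp add: sum4) (insert cases4[of i] cases4[of j], auto)
  have "(\<chi> i j. sch_gc m x i j) ** B = mat 1"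
    unfolding B_def matrix_matrix_mult_def mat_def
    by (simp add: vec_eq_iff gc_eq e1)
  moreover have "B ** (\<chi> i j. sch_gc m x i j) = mat 1"
    unfolding B_def matrix_matrix_mult_def mat_def
    by (simp add: vec_eq_iff gc_eq e2)
  ultimately have "matrix_inv (\<chi> i j. sch_gc m x i j) = B" by (rule matrix_inv_eq)
  then show ?thesis unfolding sch_ginv_def B_def by simp
qed

definition dgd :: "real \<Rightarrow> real^4 \<Rightarrow> 4 \<Rightarrow> 4 \<Rightarrow> real" where
  "dgd m x l i = (if l = 1 then
      (if i = 0 then - (2*m/(x$1)^2) else if i = 1 then - (2*m/(x$1)^2) / (sch_f m (x$1))^2
       else if i = 2 then 2 * x$1 else 2 * x$1 * (sin (x$2))^2)
    else if l = 2 then (if i = 3 then (x$1)^2 * (2 * sin (x$2) * cos (x$2)) else 0) else 0)"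

lemma gd_deriv:
  assumes "0 < m" "sch_dom m x"
  shows "((\<lambda>s. gd m (x + s *\<^sub>R axis l 1) i) has_real_derivative dgd m x l i) (at 0)"
proof -
  note df = dom_facts[OF assms]
  define a where "a = (if l = 1 then 1 else (0::real))"
  define b where "b = (if l = 2 then 1 else (0::real))"
  have y1: "(x + s *\<^sub>R axis l 1)$1 = x$1 + s * a" for s
    by (simp add: a_def axis_def)
  have y2: "(x + s *\<^sub>R axis l 1)$2 = x$2 + s * b" for s
    by (simp add: b_def axis_def)
  have fne: "x$1 - 2*m \<noteq> 0" using df by (auto simp: sch_f_def field_simps)
  have D0: "((\<lambda>s. - sch_f m (x$1 + s*a)) has_real_derivative (- (2*m/(x$1)^2)) * a) (at 0)"
    unfolding sch_f_def using df
    by (auto intro!: derivative_eq_intros simp: power2_eq_square field_simps)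
  have D1: "((\<lambda>s. inverse (sch_f m (x$1 + s*a))) has_real_derivative (- (2*m/(x$1)^2) / (sch_f m (x$1))^2) * a) (at 0)"
    unfolding sch_f_def using df fne
    by (auto intro!: derivative_eq_intros simp: power2_eq_square field_simps)
  have D2: "((\<lambda>s. (x$1 + s*a)^2) has_real_derivative (2 * x$1) * a) (at 0)"
    by (auto intro!: derivative_eq_intros simp: field_simps)
  have D3: "((\<lambda>s. (x$1 + s*a)^2 * (sin (x$2 + s*b))^2) has_real_derivative
      (2 * x$1 * (sin (x$2))^2) * a + ((x$1)^2 * (2 * sin (x$2) * cos (x$2))) * b) (at 0)"
    by (auto intro!: derivative_eq_intros simp: field_simps)
  show ?thesis
    unfolding gd_def y1 y2
    using cases4[of i] D0 D1 D2 D3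
    by (auto simp: dgd_def a_def b_def)
qed

lemma dg_eq:
  assumes "0 < m" "sch_dom m x"
  shows "sch_dg m x l i j = (if i = j then dgd m x l i else 0)"
proof (cases "i = j")
  case True
  then show ?thesis unfolding sch_dg_def gc_eq
    using DERIV_imp_deriv[OF gd_deriv[OF assms]] by simp
next
  case False
  then show ?thesis unfolding sch_dg_def gc_eq by simp
qed


lemma sum_delta4: "(\<Sum>l\<in>UNIV. (if k = l then c else 0) * h l) = (c::real) * h (k::4)"
proof -
  have "(\<Sum>l\<in>UNIV. (if k = l then c else 0) * h l) = (\<Sum>l\<in>UNIV. if k = l then c * h l else 0)"
    by (rule sum.cong) auto
  also have "\<dots> = c * h k" by (simp add: sum.delta)
  finally show ?thesis .
qed

lemma Gamma_eq:
  assumes "0 < m" "sch_dom m x"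
  shows "sch_Gamma m x k i j = 1/2 * inverse (gd m x k) *
     ((if k = j then dgd m x i k else 0) + (if k = i then dgd m x j k else 0)
       - (if i = j then dgd m x k i else 0))"
  unfolding sch_Gamma_def ginv_eq[OF assms] dg_eq[OF assms] sum_delta4
  by (simp add: eq_commute)

lemma christ0:
  assumes "0 < m" "sch_dom m x"
  shows "sch_christ m x A B $ 0 = m / ((x$1)^2 * sch_f m (x$1)) * (A$0 * B$1 + A$1 * B$0)"
proof -
  have "sch_christ m x A B $ 0 = 1/2 * inverse (gd m x 0) * (dgd m x 1 0 * A$0 * B$1 + dgd m x 1 0 * A$1 * B$0)"
    by (simp add: sch_christ_def Gamma_eq[OF assms] sum4 dgd_def algebra_simps)
  then show ?thesis using dom_facts[OF assms]
    by (simp add: dgd_def gd_def field_simps power2_eq_square)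
qed

lemma christ1:
  assumes "0 < m" "sch_dom m x"
  shows "sch_christ m x A B $ 1 = sch_f m (x$1) * m / (x$1)^2 * (A$0 * B$0)
     - m / ((x$1)^2 * sch_f m (x$1)) * (A$1 * B$1) - x$1 * sch_f m (x$1) * (A$2 * B$2)
     - x$1 * sch_f m (x$1) * (sin (x$2))^2 * (A$3 * B$3)"
proof -
  note df = dom_facts[OF assms]
  have "sch_christ m x A B $ 1 = (\<Sum>i\<in>UNIV. \<Sum>j\<in>UNIV. 1/2 * inverse (gd m x 1) *
     ((if 1 = j then dgd m x i 1 else 0) + (if 1 = i then dgd m x j 1 else 0)
       - (if i = j then dgd m x 1 i else 0)) * A$i * B$j)"
    by (simp add: sch_christ_def Gamma_eq[OF assms])
  also have "\<dots> = sch_f m (x$1) * m / (x$1)^2 * (A$0 * B$0)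
     - m / ((x$1)^2 * sch_f m (x$1)) * (A$1 * B$1) - x$1 * sch_f m (x$1) * (A$2 * B$2)
     - x$1 * sch_f m (x$1) * (sin (x$2))^2 * (A$3 * B$3)"
    using df by (simp add: sum4 dgd_def gd_def) (simp add: field_simps power2_eq_square)
  finally show ?thesis .
qed

lemma christ2:
  assumes "0 < m" "sch_dom m x"
  shows "sch_christ m x A B $ 2 = (A$1 * B$2 + A$2 * B$1) / x$1 - sin (x$2) * cos (x$2) * (A$3 * B$3)"
proof -
  note df = dom_facts[OF assms]
  have "sch_christ m x A B $ 2 = (\<Sum>i\<in>UNIV. \<Sum>j\<in>UNIV. 1/2 * inverse (gd m x 2) *
     ((if 2 = j then dgd m x i 2 else 0) + (if 2 = i then dgd m x j 2 else 0)
       - (if i = j then dgd m x 2 i else 0)) * A$i * B$j)"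
    by (simp add: sch_christ_def Gamma_eq[OF assms])
  also have "\<dots> = (A$1 * B$2 + A$2 * B$1) / x$1 - sin (x$2) * cos (x$2) * (A$3 * B$3)"
    using df by (simp add: sum4 dgd_def gd_def) (simp add: field_simps power2_eq_square sch_f_def)
  finally show ?thesis .
qed

lemma christ3:
  assumes "0 < m" "sch_dom m x"
  shows "sch_christ m x A B $ 3 = (A$1 * B$3 + A$3 * B$1) / x$1 + cos (x$2) / sin (x$2) * (A$2 * B$3 + A$3 * B$2)"
proof -
  note df = dom_facts[OF assms]
  have "sch_christ m x A B $ 3 = (\<Sum>i\<in>UNIV. \<Sum>j\<in>UNIV. 1/2 * inverse (gd m x 3) *
     ((if 3 = j then dgd m x i 3 else 0) + (if 3 = i then dgd m x j 3 else 0)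
       - (if i = j then dgd m x 3 i else 0)) * A$i * B$j)"
    by (simp add: sch_christ_def Gamma_eq[OF assms])
  also have "\<dots> = (A$1 * B$3 + A$3 * B$1) / x$1 + cos (x$2) / sin (x$2) * (A$2 * B$3 + A$3 * B$2)"
    using df by (simp add: sum4 dgd_def gd_def) (simp add: field_simps power2_eq_square sch_f_def)
  finally show ?thesis .
qed

lemma rel_norm:
  assumes m: "0 < m" and d: "sch_dom m x" and w: "sch_g m x w w = -1"
  shows "sch_g m x (rel_vel m x w (sch_U m x)) (rel_vel m x w (sch_U m x))
           = 1 - 1 / (sch_f m (x$1) * (w$0)^2)"
    and "1 \<le> sch_f m (x$1) * (w$0)^2"
proof -
  note df = dom_facts[OF m d]
  define f where "f = sch_f m (x$1)"
  define s where "s = sqrt f"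
  have fp: "0 < f" using df f_def by simp
  have sp: "0 < s" "s * s = f" using fp by (auto simp: s_def)
  define P where "P = inverse f * (w$1)^2 + (x$1)^2 * (w$2)^2 + (x$1)^2 * (sin (x$2))^2 * (w$3)^2"
  have P0: "0 \<le> P" unfolding P_def using fp by simp
  have wP: "- f * (w$0)^2 + P = -1" using w unfolding sch_g_def P_def f_def by (simp add: power2_eq_square)
  then have fw: "f * (w$0)^2 = 1 + P" by simp
  then show "1 \<le> sch_f m (x$1) * (w$0)^2" using P0 f_def by simp
  have w0: "w$0 \<noteq> 0" using fw P0 by auto
  have gU: "sch_g m x w (sch_U m x) = - (s * w$0)"
    unfolding sch_g_def sch_U_def using sp fp
    by (simp add: axis_def f_def[symmetric] s_def[symmetric]) (simp add: field_simps)
  define R where "R = rel_vel m x w (sch_U m x)"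
  have R0: "R$0 = 0" unfolding R_def rel_vel_def gU using sp w0
    by (simp add: sch_U_def axis_def f_def[symmetric] s_def[symmetric] field_simps)
  have Ri: "R$1 = w$1 / (s * w$0)" "R$2 = w$2 / (s * w$0)" "R$3 = w$3 / (s * w$0)"
    unfolding R_def rel_vel_def gU using sp w0
    by (simp_all add: sch_U_def axis_def)
  have sq: "(a / (s * w$0))^2 = a^2/(f*(w$0)^2)" for a
    using sp by (simp add: power_divide power_mult_distrib power2_eq_square)
  have "sch_g m x R R = inverse f * (R$1)^2 + (x$1)^2 * (R$2)^2 + (x$1)^2 * (sin (x$2))^2 * (R$3)^2"
    unfolding sch_g_def R0 f_def by (simp add: power2_eq_square)
  also have "\<dots> = P / (f * (w$0)^2)"
    unfolding Ri sq P_def using fp w0 by (simp add: field_simps)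
  also have "\<dots> = 1 - 1 / (f * (w$0)^2)" using fw P0 w0 fp by (simp add: field_simps)
  finally show "sch_g m x (rel_vel m x w (sch_U m x)) (rel_vel m x w (sch_U m x))
           = 1 - 1 / (sch_f m (x$1) * (w$0)^2)" unfolding R_def f_def .
qed

lemma comp_deriv:
  "(f has_vector_derivative f') F \<Longrightarrow> ((\<lambda>s. f s $ i) has_real_derivative f' $ i) F"
  unfolding has_real_derivative_iff_has_vector_derivative
  by (rule bounded_linear.has_vector_derivative[OF bounded_linear_vec_nth])

lemma G_deriv:
  fixes r th a b c d :: "real \<Rightarrow> real"
  assumes Df: "((\<lambda>s. sch_f m (r s)) has_real_derivative fd) (at s0 within S)"
    and Dr: "(r has_real_derivative r') (at s0 within S)"
    and Dth: "(th has_real_derivative th') (at s0 within S)"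
    and Da: "(a has_real_derivative a') (at s0 within S)"
    and Db: "(b has_real_derivative b') (at s0 within S)"
    and Dc: "(c has_real_derivative c') (at s0 within S)"
    and Dd: "(d has_real_derivative d') (at s0 within S)"
    and fnz: "sch_f m (r s0) \<noteq> 0"
  shows "((\<lambda>s. - sch_f m (r s) * (a s)^2 + inverse (sch_f m (r s)) * (b s)^2
        + (r s)^2 * (c s)^2 + (r s)^2 * (sin (th s))^2 * (d s)^2) has_real_derivative
   (- fd * (a s0)^2 - sch_f m (r s0) * (2 * a s0 * a') - fd / (sch_f m (r s0))^2 * (b s0)^2
    + inverse (sch_f m (r s0)) * (2 * b s0 * b') + 2 * r s0 * r' * (c s0)^2 + (r s0)^2 * (2 * c s0 * c')
    + (2 * r s0 * r' * (sin (th s0))^2 + (r s0)^2 * (2 * sin (th s0) * cos (th s0) * th')) * (d s0)^2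
    + (r s0)^2 * (sin (th s0))^2 * (2 * d s0 * d'))) (at s0 within S)"
  using fnz
  by (auto intro!: derivative_eq_intros Df Dr Dth Da Db Dc Dd simp: field_simps power2_eq_square)

theorem theorem1:
  fixes m :: real and p q u' :: "real^4"
    and \<psi> V :: "real \<Rightarrow> real^4"
  assumes m_pos: "0 < m"
    and p_dom: "sch_dom m p" and q_dom: "sch_dom m q"
    and same_t: "q$0 = p$0"
    and u'_vel: "sch_4velocity m q u'"
    and geod: "sch_geodesic m \<psi> 0 1"
    and psi0: "\<psi> 0 = p" and psi1: "\<psi> 1 = q"
    and spacelike: "sch_g m p (vector_derivative \<psi> (at 0 within {0..1}))
                              (vector_derivative \<psi> (at 0 within {0..1})) > 0"
    and orth: "sch_g m p (vector_derivative \<psi> (at 0 within {0..1})) (sch_U m p) = 0"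
    and par: "sch_parallel m \<psi> V 0 1"
    and V1: "V 1 = u'"
  shows "(sch_norm m p (rel_vel m p (V 0) (sch_U m p)))^2
           = (sch_norm m q (rel_vel m q u' (sch_U m q)))^2
       \<and> (sch_norm m q (rel_vel m q u' (sch_U m q)))^2
           = 1 - q$1 / ((q$1 - 2 * m) * (u'$0)^2)"
proof -
  define I where "I = {0..1::real}"
  define X where "X = (\<lambda>\<sigma>. vector_derivative \<psi> (at \<sigma> within I))"
  have I01: "0 \<in> I" "1 \<in> I" unfolding I_def by auto
  have cI: "convex I" unfolding I_def by (rule convex_real_interval)
  have dom: "sch_dom m (\<psi> s)" if "s \<in> I" for s
    using geod that unfolding sch_geodesic_def I_def by auto
  have Dpsi: "(\<psi> has_vector_derivative X s) (at s within I)" if "s \<in> I" for s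
    using geod that unfolding sch_geodesic_def I_def X_def
    by (auto simp: vector_derivative_works[symmetric])
  have DX: "(X has_vector_derivative - sch_christ m (\<psi> s) (X s) (X s)) (at s within I)" if "s \<in> I" for s
    using geod that unfolding sch_geodesic_def I_def X_def by auto
  have DV: "(V has_vector_derivative - sch_christ m (\<psi> s) (X s) (V s)) (at s within I)" if "s \<in> I" for s
    using par that unfolding sch_parallel_def I_def X_def by auto
  have df: "0 < \<psi> s $ 1" "0 < sch_f m (\<psi> s $ 1)" "0 < sin (\<psi> s $ 2)" if "s \<in> I" for s
    using dom_facts[OF m_pos dom[OF that]] by auto
  have Df: "((\<lambda>s. sch_f m (\<psi> s $ 1)) has_real_derivative 2 * m / (\<psi> s $ 1)^2 * X s $ 1) (at s within I)"
    if "s \<in> I" for s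
    unfolding sch_f_def using df[OF that]
    by (auto intro!: derivative_eq_intros comp_deriv[OF Dpsi[OF that]] simp: field_simps power2_eq_square)
  have X00: "X 0 $ 0 = 0"
  proof -
    have "sch_g m p (X 0) (sch_U m p) = - sqrt (sch_f m (p$1)) * X 0 $ 0"
      using df[OF I01(1)] psi0 unfolding sch_g_def sch_U_def
      by (simp add: axis_def) (simp add: field_simps real_sqrt_divide)
    then show ?thesis using orth df[OF I01(1)] psi0 unfolding X_def I_def by simp
  qed
  have T0: "((\<lambda>s. sch_f m (\<psi> s $ 1) * X s $ 0) has_real_derivative 0) (at s within I)" if "s \<in> I" for s
  proof -
    have "((\<lambda>s. sch_f m (\<psi> s $ 1) * X s $ 0) has_real_derivative
       2 * m / (\<psi> s $ 1)^2 * X s $ 1 * X s $ 0 + (- sch_christ m (\<psi> s) (X s) (X s)) $ 0 * sch_f m (\<psi> s $ 1))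
         (at s within I)"
      by (rule DERIV_mult[OF Df[OF that] comp_deriv[OF DX[OF that]]])
    then show ?thesis
      using df[OF that] by (simp add: christ0[OF m_pos dom[OF that]] field_simps power2_eq_square)
  qed
  obtain cT where cT: "\<And>s. s \<in> I \<Longrightarrow> sch_f m (\<psi> s $ 1) * X s $ 0 = cT"
    using has_field_derivative_zero_constant[OF cI T0] by blast
  have Xt: "X s $ 0 = 0" if "s \<in> I" for s
    using cT[OF that] cT[OF I01(1)] X00 df[OF that] by simp
  have W0: "((\<lambda>s. sqrt (sch_f m (\<psi> s $ 1)) * V s $ 0) has_real_derivative 0) (at s within I)" if "s \<in> I" for s
  proof -
    have Dsq: "((\<lambda>s. sqrt (sch_f m (\<psi> s $ 1))) has_real_derivative
        inverse (sqrt (sch_f m (\<psi> s $ 1))) / 2 * (2 * m / (\<psi> s $ 1)^2 * X s $ 1)) (at s within I)"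
      by (rule DERIV_chain2[OF DERIV_real_sqrt Df[OF that]]) (use df[OF that] in simp)
    have "((\<lambda>s. sqrt (sch_f m (\<psi> s $ 1)) * V s $ 0) has_real_derivative
       inverse (sqrt (sch_f m (\<psi> s $ 1))) / 2 * (2 * m / (\<psi> s $ 1)^2 * X s $ 1) * V s $ 0
        + (- sch_christ m (\<psi> s) (X s) (V s)) $ 0 * sqrt (sch_f m (\<psi> s $ 1))) (at s within I)"
      by (rule DERIV_mult[OF Dsq comp_deriv[OF DV[OF that]]])
    moreover have "sqrt (sch_f m (\<psi> s $ 1)) * sqrt (sch_f m (\<psi> s $ 1)) = sch_f m (\<psi> s $ 1)"
      using df[OF that] by simp
    ultimately show ?thesis
      using df[OF that] Xt[OF that]
      by (simp add: christ0[OF m_pos dom[OF that]] field_simps power2_eq_square)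
  qed
  obtain cW where cW: "\<And>s. s \<in> I \<Longrightarrow> sqrt (sch_f m (\<psi> s $ 1)) * V s $ 0 = cW"
    using has_field_derivative_zero_constant[OF cI W0] by blast
  have Weq: "sqrt (sch_f m (p $ 1)) * V 0 $ 0 = sqrt (sch_f m (q $ 1)) * u' $ 0"
    using cW[OF I01(1)] cW[OF I01(2)] psi0 psi1 V1 by simp
  have G0: "((\<lambda>s. sch_g m (\<psi> s) (V s) (V s)) has_real_derivative 0) (at s within I)" if "s \<in> I" for s
  proof -
    note d = df[OF that]
    have eq: "(\<lambda>s. sch_g m (\<psi> s) (V s) (V s)) = (\<lambda>s. - sch_f m (\<psi> s $ 1) * (V s $ 0)^2
        + inverse (sch_f m (\<psi> s $ 1)) * (V s $ 1)^2
        + (\<psi> s $ 1)^2 * (V s $ 2)^2 + (\<psi> s $ 1)^2 * (sin (\<psi> s $ 2))^2 * (V s $ 3)^2)"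
      by (simp add: sch_g_def power2_eq_square fun_eq_iff)
    show ?thesis
      unfolding eq
      apply (rule DERIV_cong[OF G_deriv[OF Df[OF that] comp_deriv[OF Dpsi[OF that]] comp_deriv[OF Dpsi[OF that]]
          comp_deriv[OF DV[OF that]] comp_deriv[OF DV[OF that]] comp_deriv[OF DV[OF that]] comp_deriv[OF DV[OF that]]]])
      using d Xt[OF that]
      by (simp_all add: christ0[OF m_pos dom[OF that]] christ1[OF m_pos dom[OF that]]
          christ2[OF m_pos dom[OF that]] christ3[OF m_pos dom[OF that]] field_simps power2_eq_square)
  qed
  obtain cG where cG: "\<And>s. s \<in> I \<Longrightarrow> sch_g m (\<psi> s) (V s) (V s) = cG"
    using has_field_derivative_zero_constant[OF cI G0] by blast
  have gq: "sch_g m q u' u' = -1" using u'_vel unfolding sch_4velocity_def by simp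
  have gp: "sch_g m p (V 0) (V 0) = -1"
    using cG[OF I01(1)] cG[OF I01(2)] psi0 psi1 V1 gq by simp
  have np: "sch_g m p (rel_vel m p (V 0) (sch_U m p)) (rel_vel m p (V 0) (sch_U m p))
      = 1 - 1 / (sch_f m (p$1) * (V 0 $ 0)^2)" by (rule rel_norm(1)[OF m_pos p_dom gp])
  have nq: "sch_g m q (rel_vel m q u' (sch_U m q)) (rel_vel m q u' (sch_U m q))
      = 1 - 1 / (sch_f m (q$1) * (u' $ 0)^2)" by (rule rel_norm(1)[OF m_pos q_dom gq])
  have ge: "1 \<le> sch_f m (q$1) * (u' $ 0)^2" by (rule rel_norm(2)[OF m_pos q_dom gq])
  have fpq: "sch_f m (p$1) * (V 0 $ 0)^2 = sch_f m (q$1) * (u' $ 0)^2"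
  proof -
    have "(sqrt (sch_f m (p $ 1)) * V 0 $ 0)^2 = (sqrt (sch_f m (q $ 1)) * u' $ 0)^2" using Weq by simp
    then show ?thesis using dom_facts[OF m_pos p_dom] dom_facts[OF m_pos q_dom]
      by (simp add: power_mult_distrib)
  qed
  have nonneg: "0 \<le> 1 - 1 / (sch_f m (q$1) * (u' $ 0)^2)" using ge by (simp add: field_simps)
  have fin: "1 - 1 / (sch_f m (q$1) * (u' $ 0)^2) = 1 - q$1 / ((q$1 - 2 * m) * (u'$0)^2)"
    using dom_facts[OF m_pos q_dom] by (simp add: sch_f_def field_simps)
  show ?thesis
    unfolding sch_norm_def np nq fpq using nonneg fin by simp
qed
end
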